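(* Let $\delta\ge0$ and let $T\in C^1(\mathbb{T}^1)$ be a diffeomorphism with $T'>0$ and rotation number $\rho\in D_\delta$, having an invariant probability measure with continuous positive density $h$. Suppose that for some $\nu\in\left[\frac{\delta}{1+\delta},1\right]$ there is $C$ with $|(T^{q_n})'(\xi)-1|\le C\Delta_n^\nu$ for all $n\ge0$, $\xi\in\mathbb{T}^1$. Then $h\in C^{\nu(1+\delta)-\delta}(\mathbb{T}^1)$.
   Context: An irrational $\rho$ is in $D_\delta$ if there is $C>0$ with $|\rho-p/q|\ge Cq^{-2-\delta}$ for all rationals $p/q$. Write $\rho\in(0,1)$ as a continued fraction $\rho=[k_1,k_2,\dots]$ with convergents $p_n/q_n$, where $p_0=0,q_0=1,p_{-1}=1,q_{-1}=0$, $p_n=k_np_{n-1}+p_{n-2}$, $q_n=k_nq_{n-1}+q_{n-2}$; set $\Delta_n=|q_n\rho-p_n|$. $C^\alpha$ for $\alpha\in(0,1]$ means $\alpha$-Hölder continuous; $C^0$ means continuous. *)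

theory Defs
  imports "HOL-Analysis.Analysis"
begin

definition in_D :: "real \<Rightarrow> real \<Rightarrow> bool" where
  "in_D \<delta> \<rho> \<longleftrightarrow> \<rho> \<notin> \<rat> \<and>
     (\<exists>C>0. \<forall>(p::int) (q::nat). q > 0 \<longrightarrow> \<bar>\<rho> - real_of_int p / real q\<bar> \<ge> C * real q powr (-2 - \<delta>))"

text \<open>Gauss-map remainders: x_1 = rho, x_{n+1} = frac(1/x_n); cf_rem rho n = x_{n+1}.\<close>
fun cf_rem :: "real \<Rightarrow> nat \<Rightarrow> real" where
  "cf_rem \<rho> 0 = \<rho>"
| "cf_rem \<rho> (Suc n) = frac (1 / cf_rem \<rho> n)"

text \<open>Partial quotients k_n (n \<ge> 1) of rho = [k_1, k_2, ...].\<close>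
definition cf_digit :: "real \<Rightarrow> nat \<Rightarrow> nat" where
  "cf_digit \<rho> n = nat \<lfloor>1 / cf_rem \<rho> (n - 1)\<rfloor>"

text \<open>Convergents p_n/q_n with p_0=0, q_0=1, p_{-1}=1, q_{-1}=0.\<close>
fun cf_p :: "real \<Rightarrow> nat \<Rightarrow> nat" where
  "cf_p \<rho> 0 = 0"
| "cf_p \<rho> (Suc 0) = 1"
| "cf_p \<rho> (Suc (Suc n)) = cf_digit \<rho> (n + 2) * cf_p \<rho> (Suc n) + cf_p \<rho> n"

fun cf_q :: "real \<Rightarrow> nat \<Rightarrow> nat" where
  "cf_q \<rho> 0 = 1"
| "cf_q \<rho> (Suc 0) = cf_digit \<rho> 1"
| "cf_q \<rho> (Suc (Suc n)) = cf_digit \<rho> (n + 2) * cf_q \<rho> (Suc n) + cf_q \<rho> n"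

definition cf_Delta :: "real \<Rightarrow> nat \<Rightarrow> real" where
  "cf_Delta \<rho> n = \<bar>real (cf_q \<rho> n) * \<rho> - real (cf_p \<rho> n)\<bar>"

definition holder_C :: "real \<Rightarrow> (real \<Rightarrow> real) \<Rightarrow> bool" where
  "holder_C \<alpha> h \<longleftrightarrow> continuous_on UNIV h \<and>
     (\<alpha> > 0 \<longrightarrow> (\<exists>C. \<forall>x y. \<bar>h x - h y\<bar> \<le> C * \<bar>x - y\<bar> powr \<alpha>))"

end

theory Submission
  imports Defs "HOL-Analysis.Analysis"
begin


declare cf_rem.simps(2)[simp del]

lemma cf_rem_props:
  assumes "\<rho> \<notin> \<rat>" "0 < \<rho>" "\<rho> < 1"
  shows "cf_rem \<rho> n \<notin> \<rat> \<and> 0 < cf_rem \<rho> n \<and> cf_rem \<rho> n < 1"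
proof (induction n)
  case 0 then show ?case using assms by simp
next
  case (Suc n)
  define r where "r = cf_rem \<rho> n"
  have r: "r \<notin> \<rat>" "0 < r" "r < 1" using Suc r_def by auto
  have i: "1 / r \<notin> \<rat>"
  proof
    assume "1 / r \<in> \<rat>"
    then have "1 / (1 / r) \<in> \<rat>" by (rule Rats_divide[OF Rats_1])
    then show False using r by simp
  qed
  have "frac (1/r) \<notin> \<rat>"
  proof
    assume "frac (1/r) \<in> \<rat>"
    then have "frac (1/r) + of_int \<lfloor>1/r\<rfloor> \<in> \<rat>" by (intro Rats_add) auto
    then show False using i by (simp add: frac_def)
  qed
  moreover have "frac (1/r) \<noteq> 0" using calculation by (metis Rats_0)
  ultimately show ?case using frac_ge_0[of "1/r"] frac_lt_1[of "1/r"] by (simp add: r_def cf_rem.simps(2))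
qed

lemma cf_digit_Suc:
  assumes "\<rho> \<notin> \<rat>" "0 < \<rho>" "\<rho> < 1"
  shows "real (cf_digit \<rho> (Suc n)) = of_int \<lfloor>1 / cf_rem \<rho> n\<rfloor> \<and> cf_digit \<rho> (Suc n) \<ge> 1"
proof -
  have r: "0 < cf_rem \<rho> n" "cf_rem \<rho> n < 1" using cf_rem_props[OF assms] by auto
  then have "1 / cf_rem \<rho> n > 1" by simp
  define z where "z = \<lfloor>1 / cf_rem \<rho> n\<rfloor>"
  have "z \<ge> 1" unfolding z_def using \<open>1 / cf_rem \<rho> n > 1\<close> by linarith
  then have "real (nat z) = of_int z" "nat z \<ge> 1" by auto
  then show ?thesis by (simp add: cf_digit_def z_def)
qed

lemma cf_rem_Suc':
  assumes "\<rho> \<notin> \<rat>" "0 < \<rho>" "\<rho> < 1"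
  shows "cf_rem \<rho> (Suc n) = 1 / cf_rem \<rho> n - real (cf_digit \<rho> (Suc n))"
  using cf_digit_Suc[OF assms, of n] by (simp add: frac_def cf_rem.simps(2))

definition cfP :: "real \<Rightarrow> nat \<Rightarrow> real" where
  "cfP \<rho> n = (\<Prod>i\<le>n. cf_rem \<rho> i)"

lemma cfP_pos:
  assumes "\<rho> \<notin> \<rat>" "0 < \<rho>" "\<rho> < 1"
  shows "cfP \<rho> n > 0"
  unfolding cfP_def using cf_rem_props[OF assms] by (intro prod_pos) auto

lemma cfP_Suc: "cfP \<rho> (Suc n) = cfP \<rho> n * cf_rem \<rho> (Suc n)"
  unfolding cfP_def by (simp add: prod.atMost_Suc)

lemma cfP_rec:
  assumes "\<rho> \<notin> \<rat>" "0 < \<rho>" "\<rho> < 1"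
  shows "cfP \<rho> (Suc (Suc n)) = cfP \<rho> n - real (cf_digit \<rho> (n+2)) * cfP \<rho> (Suc n)"
proof -
  have r: "cf_rem \<rho> (Suc n) > 0" using cf_rem_props[OF assms] by auto
  have "cfP \<rho> (Suc (Suc n)) = cfP \<rho> n * cf_rem \<rho> (Suc n) * (1 / cf_rem \<rho> (Suc n) - real (cf_digit \<rho> (Suc (Suc n))))"
    by (simp add: cfP_Suc cf_rem_Suc'[OF assms, of "Suc n"])
  also have "\<dots> = cfP \<rho> n - real (cf_digit \<rho> (n+2)) * cfP \<rho> (Suc n)"
    using r by (simp add: cfP_Suc field_simps)
  finally show ?thesis .
qed

lemma cf_e:
  assumes "\<rho> \<notin> \<rat>" "0 < \<rho>" "\<rho> < 1"
  shows "real (cf_q \<rho> n) * \<rho> - real (cf_p \<rho> n) = (-1)^n * cfP \<rho> n \<and>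
         real (cf_q \<rho> (Suc n)) * \<rho> - real (cf_p \<rho> (Suc n)) = (-1)^(Suc n) * cfP \<rho> (Suc n)"
proof (induction n)
  case 0
  have "cf_rem \<rho> 1 = 1/\<rho> - real (cf_digit \<rho> 1)" using cf_rem_Suc'[OF assms, of 0] by simp
  then have "\<rho> * cf_rem \<rho> 1 = 1 - real (cf_digit \<rho> 1) * \<rho>" using assms by (simp add: field_simps)
  then show ?case by (simp add: cfP_def)
next
  case (Suc n)
  have "real (cf_q \<rho> (Suc (Suc n))) * \<rho> - real (cf_p \<rho> (Suc (Suc n))) =
     real (cf_digit \<rho> (n+2)) * (real (cf_q \<rho> (Suc n)) * \<rho> - real (cf_p \<rho> (Suc n)))
     + (real (cf_q \<rho> n) * \<rho> - real (cf_p \<rho> n))"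
    by (simp add: algebra_simps)
  also have "\<dots> = real (cf_digit \<rho> (n+2)) * ((-1)^Suc n * cfP \<rho> (Suc n)) + (-1)^n * cfP \<rho> n"
    using Suc by simp
  also have "\<dots> = (-1)^n * (cfP \<rho> n - real (cf_digit \<rho> (n+2)) * cfP \<rho> (Suc n))"
    by (simp add: algebra_simps)
  also have "\<dots> = (-1)^(Suc (Suc n)) * cfP \<rho> (Suc (Suc n))"
    using cfP_rec[OF assms, of n] by simp
  finally show ?case using Suc by simp
qed

lemma cf_Delta_eq:
  assumes "\<rho> \<notin> \<rat>" "0 < \<rho>" "\<rho> < 1"
  shows "cf_Delta \<rho> n = cfP \<rho> n"
  using cf_e[OF assms, of n] cfP_pos[OF assms, of n]
  by (simp add: cf_Delta_def abs_mult)

lemma cf_q_pos: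
  assumes "\<rho> \<notin> \<rat>" "0 < \<rho>" "\<rho> < 1"
  shows "cf_q \<rho> n \<ge> 1 \<and> cf_q \<rho> (Suc n) \<ge> 1"
proof (induction n)
  case 0 then show ?case using cf_digit_Suc[OF assms, of 0] by simp
next
  case (Suc n)
  have "cf_digit \<rho> (n+2) \<ge> 1" using cf_digit_Suc[OF assms, of "Suc n"] by simp
  then have "cf_q \<rho> (Suc (Suc n)) \<ge> 1" using Suc
    by simp
  then show ?case using Suc by simp
qed

lemma cf_ident:
  assumes "\<rho> \<notin> \<rat>" "0 < \<rho>" "\<rho> < 1"
  shows "real (cf_q \<rho> (Suc n)) * cfP \<rho> n + real (cf_q \<rho> n) * cfP \<rho> (Suc n) = 1"
proof (induction n)
  case 0
  have "cf_rem \<rho> 1 = 1/\<rho> - real (cf_digit \<rho> 1)" using cf_rem_Suc'[OF assms, of 0] by simp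
  then have "\<rho> * cf_rem \<rho> 1 = 1 - real (cf_digit \<rho> 1) * \<rho>" using assms by (simp add: field_simps)
  then show ?case by (simp add: cfP_def)
next
  case (Suc n)
  show ?case using Suc by (simp add: cfP_rec[OF assms] algebra_simps)
qed

lemma cfP_Suc_less:
  assumes "\<rho> \<notin> \<rat>" "0 < \<rho>" "\<rho> < 1"
  shows "cfP \<rho> (Suc n) < cfP \<rho> n"
  using cfP_Suc[of \<rho> n] cfP_pos[OF assms, of n] cf_rem_props[OF assms, of "Suc n"]
  by (simp add: mult_less_cancel_left1)

lemma cfP_SS_half:
  assumes "\<rho> \<notin> \<rat>" "0 < \<rho>" "\<rho> < 1"
  shows "cfP \<rho> (Suc (Suc n)) < cfP \<rho> n / 2"
proof -
  define s where "s = cf_rem \<rho> (Suc n)"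
  have s: "0 < s" "s < 1" using cf_rem_props[OF assms] s_def by auto
  have r2: "cf_rem \<rho> (Suc (Suc n)) = 1/s - of_int \<lfloor>1/s\<rfloor>"
    using cf_rem_Suc'[OF assms, of "Suc n"] cf_digit_Suc[OF assms, of "Suc n"] s_def by simp
  have r2b: "0 < cf_rem \<rho> (Suc (Suc n))" "cf_rem \<rho> (Suc (Suc n)) < 1" using cf_rem_props[OF assms] by auto
  have key: "s * cf_rem \<rho> (Suc (Suc n)) < 1/2"
  proof (cases "s \<le> 1/2")
    case True
    have "s * cf_rem \<rho> (Suc (Suc n)) < s * 1" using r2b s by (intro mult_strict_left_mono) auto
    then show ?thesis using True by simp
  next
    case False
    then have "1/s < 2" "1/s > 1" using s by (auto simp: field_simps)
    then have "\<lfloor>1/s\<rfloor> = 1" by linarith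
    then have "s * cf_rem \<rho> (Suc (Suc n)) = 1 - s" using r2 s by (simp add: field_simps)
    then show ?thesis using False by simp
  qed
  have "cfP \<rho> (Suc (Suc n)) = cfP \<rho> n * (s * cf_rem \<rho> (Suc (Suc n)))"
    by (simp add: cfP_Suc s_def)
  also have "\<dots> < cfP \<rho> n * (1/2)"
    using key cfP_pos[OF assms, of n] by (intro mult_strict_left_mono) auto
  finally show ?thesis by simp
qed

lemma cfP_decay:
  assumes "\<rho> \<notin> \<rat>" "0 < \<rho>" "\<rho> < 1"
  shows "cfP \<rho> (2*n) \<le> (1/2)^n"
proof (induction n)
  case 0 then show ?case using assms by (simp add: cfP_def)
next
  case (Suc n)
  have "cfP \<rho> (2 * Suc n) < cfP \<rho> (2*n) / 2" using cfP_SS_half[OF assms, of "2*n"] by simp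
  then show ?case using Suc by simp
qed

lemma cfP_mono:
  assumes "\<rho> \<notin> \<rat>" "0 < \<rho>" "\<rho> < 1" "m \<le> n"
  shows "cfP \<rho> n \<le> cfP \<rho> m"
  using assms(4)
proof (induction n rule: dec_induct)
  case base then show ?case by simp
next
  case (step n) then show ?case using cfP_Suc_less[OF assms(1-3), of n] by simp
qed

lemma cfP_lim:
  assumes "\<rho> \<notin> \<rat>" "0 < \<rho>" "\<rho> < 1"
  shows "cfP \<rho> \<longlonglongrightarrow> 0"
proof (rule LIMSEQ_I)
  fix r :: real assume "0 < r"
  obtain N where N: "(1/2::real)^N < r" using real_arch_pow_inv[OF \<open>0<r\<close>, of "1/2"] by auto
  show "\<exists>no. \<forall>n\<ge>no. norm (cfP \<rho> n - 0) < r"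
  proof (intro exI allI impI)
    fix n assume "2*N \<le> n"
    then have "cfP \<rho> n \<le> cfP \<rho> (2*N)" by (rule cfP_mono[OF assms])
    then show "norm (cfP \<rho> n - 0) < r" using cfP_decay[OF assms, of N] N cfP_pos[OF assms, of n] by simp
  qed
qed

lemma cf_dioph:
  assumes "\<rho> \<notin> \<rat>" "0 < \<rho>" "\<rho> < 1" "in_D \<delta> \<rho>" "\<delta> \<ge> 0"
  shows "\<exists>c>0. \<forall>n. cfP \<rho> (Suc n) \<ge> c * cfP \<rho> n powr (1 + \<delta>)"
proof -
  obtain C where C: "C > 0" "\<And>(p::int) (q::nat). q > 0 \<Longrightarrow> \<bar>\<rho> - real_of_int p / real q\<bar> \<ge> C * real q powr (-2 - \<delta>)"
    using assms(4) unfolding in_D_def by blast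
  have "cfP \<rho> (Suc n) \<ge> C * cfP \<rho> n powr (1 + \<delta>)" for n
  proof -
    define q where "q = cf_q \<rho> (Suc n)"
    define p where "p = cf_p \<rho> (Suc n)"
    have q1: "q \<ge> 1" using cf_q_pos[OF assms(1-3), of n] q_def by simp
    have Pn: "cfP \<rho> n > 0" "cfP \<rho> (Suc n) > 0" using cfP_pos[OF assms(1-3)] by auto
    have qle: "real q * cfP \<rho> n \<le> 1"
    proof -
      have "real (cf_q \<rho> n) * cfP \<rho> (Suc n) \<ge> 0" using Pn by simp
      then show ?thesis using cf_ident[OF assms(1-3), of n] unfolding q_def by linarith
    qed
    have "cfP \<rho> (Suc n) = \<bar>real q * \<rho> - real p\<bar>"
      using cf_Delta_eq[OF assms(1-3), of "Suc n"] by (simp add: cf_Delta_def q_def p_def)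
    also have "\<dots> = real q * \<bar>\<rho> - real_of_int (int p) / real q\<bar>"
      using q1 by (simp add: field_simps abs_mult[symmetric])
    also have "\<dots> \<ge> real q * (C * real q powr (-2 - \<delta>))"
      using C(2)[of q "int p"] q1 by (intro mult_left_mono) auto
    finally have a: "cfP \<rho> (Suc n) \<ge> C * (real q * real q powr (-2 - \<delta>))" by (simp add: algebra_simps)
    have "real q * real q powr (-2 - \<delta>) = real q powr (-1 - \<delta>)"
      using q1 by (simp add: powr_add[symmetric] powr_mult_base)
    also have "\<dots> \<ge> (1 / cfP \<rho> n) powr (-1 - \<delta>)"
      using q1 qle Pn assms(5) by (intro powr_mono2') (auto simp: field_simps)
    also have "(1 / cfP \<rho> n) powr (-1 - \<delta>) = cfP \<rho> n powr (1 + \<delta>)"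
    proof -
      have "(1 / cfP \<rho> n) powr (-1 - \<delta>) = (1 / cfP \<rho> n) powr (-(1 + \<delta>))" by simp
      also have "\<dots> = inverse ((1 / cfP \<rho> n) powr (1 + \<delta>))" by (rule powr_minus)
      also have "\<dots> = cfP \<rho> n powr (1 + \<delta>)" using Pn by (simp add: powr_divide)
      finally show ?thesis .
    qed
    finally have "C * cfP \<rho> n powr (1 + \<delta>) \<le> C * (real q * real q powr (-2 - \<delta>))"
      using C(1) by (intro mult_left_mono) auto
    then show ?thesis using a by linarith
  qed
  then show ?thesis using C(1) by blast
qed



lemma holder_abstract:
  fixes \<phi> :: "real \<Rightarrow> real" and D :: "nat \<Rightarrow> real"
  assumes Dpos: "\<And>n. D n > 0"
    and Dhalf: "\<And>n. D (Suc (Suc n)) < D n / 2"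
    and Dsuc: "\<And>n. D (Suc n) < D n"
    and Dlim: "D \<longlonglongrightarrow> 0"
    and Ddio: "\<And>n. D (Suc n) \<ge> c * D n powr (1+\<delta>)" and c: "c > 0"
    and phi_cont: "\<And>x. isCont \<phi> x"
    and phi_bd: "\<And>u v. \<bar>\<phi> u - \<phi> v\<bar> \<le> Mb"
    and step: "\<And>n y. \<bar>\<phi> (y + D n) - \<phi> y\<bar> \<le> K * D n powr \<nu>"
    and K: "K \<ge> 0" and \<delta>: "\<delta> \<ge> 0" and \<nu>: "\<nu> \<le> 1"
    and \<alpha>: "\<alpha> = \<nu>*(1+\<delta>) - \<delta>" "\<alpha> > 0"
  shows "\<exists>B. \<forall>u v. \<bar>\<phi> u - \<phi> v\<bar> \<le> B * \<bar>u - v\<bar> powr \<alpha>"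
proof -
  have mult: "\<bar>\<phi> (y + real a * D n) - \<phi> y\<bar> \<le> real a * K * D n powr \<nu>" for a n y
  proof (induction a)
    case 0 then show ?case by simp
  next
    case (Suc a)
    have e: "y + real (Suc a) * D n = (y + real a * D n) + D n" by (simp add: algebra_simps)
    have "\<bar>\<phi> (y + real (Suc a) * D n) - \<phi> y\<bar> \<le>
       \<bar>\<phi> ((y + real a * D n) + D n) - \<phi> (y + real a * D n)\<bar> + \<bar>\<phi> (y + real a * D n) - \<phi> y\<bar>"
      unfolding e by linarith
    also have "\<dots> \<le> K * D n powr \<nu> + real a * K * D n powr \<nu>"
      using step Suc by (intro add_mono) auto
    finally show ?case by (simp add: algebra_simps)
  qed
  define c' where "c' = c powr (\<nu> - 1)"
  have c'pos: "c' > 0" unfolding c'_def using c by simp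
  have alpha_eq: "1 + (1+\<delta>)*(\<nu>-1) = \<alpha>" using \<alpha> by (simp add: algebra_simps)
  have key1: "D (Suc n) powr (\<nu>-1) \<le> c' * x powr ((1+\<delta>)*(\<nu>-1))" if x: "0 < x" "x \<le> D n" for x n
  proof -
    have "c * x powr (1+\<delta>) \<le> c * D n powr (1+\<delta>)"
      using x c \<delta> by (intro mult_left_mono powr_mono2) auto
    also have "\<dots> \<le> D (Suc n)" by (rule Ddio)
    finally have le: "c * x powr (1+\<delta>) \<le> D (Suc n)" .
    have "D (Suc n) powr (\<nu>-1) \<le> (c * x powr (1+\<delta>)) powr (\<nu>-1)"
      using le x c \<nu> by (intro powr_mono2') auto
    also have "\<dots> = c' * x powr ((1+\<delta>)*(\<nu>-1))"
      using c x by (simp add: c'_def powr_mult powr_powr)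
    finally show ?thesis .
  qed
  have key2: "x * (c' * x powr ((1+\<delta>)*(\<nu>-1))) = c' * x powr \<alpha>" if "x > 0" for x
  proof -
    have "x * x powr ((1+\<delta>)*(\<nu>-1)) = x powr (1 + (1+\<delta>)*(\<nu>-1))"
      using that by (simp add: powr_add)
    then show ?thesis using alpha_eq by (simp add: algebra_simps)
  qed
  have Dn_bound: "D n * D (Suc n) powr (\<nu>-1) \<le> c' * D n powr \<alpha>" for n
  proof -
    have "D n * D (Suc n) powr (\<nu>-1) \<le> D n * (c' * D n powr ((1+\<delta>)*(\<nu>-1)))"
      using key1[of "D n" n] Dpos[of n] by (intro mult_left_mono) auto
    then show ?thesis using key2[of "D n"] Dpos[of n] by simp
  qed
  define q where "q = (2::real) powr (-\<alpha>)"
  have q: "0 < q" "q < 1" unfolding q_def using \<alpha> by (auto intro: powr_less_one)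
  define A where "A = K * c' / (1 - q)"
  have A: "A \<ge> 0" "A * (1 - q) = K * c'"
    unfolding A_def using q K c'pos by (auto intro!: divide_nonneg_nonneg mult_nonneg_nonneg)
  have half_alpha: "D (Suc (Suc n)) powr \<alpha> \<le> q * D n powr \<alpha>" for n
  proof -
    have "D (Suc (Suc n)) powr \<alpha> \<le> (D n / 2) powr \<alpha>"
      by (rule powr_mono2) (use Dhalf[of n] Dpos[of "Suc (Suc n)"] \<alpha> in auto)
    also have "\<dots> = q * D n powr \<alpha>"
      using Dpos[of n] by (simp add: powr_divide q_def powr_minus field_simps)
    finally show ?thesis .
  qed
  define bound where "bound n t = K*t*D (Suc n) powr (\<nu>-1) + A*(D (Suc n) powr \<alpha> + D (Suc (Suc n)) powr \<alpha>)" for n t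
  have bound_nn: "bound n t \<ge> 0" if "t \<ge> 0" for n t
    unfolding bound_def using that K A by (intro add_nonneg_nonneg mult_nonneg_nonneg) auto
  have claim: "\<forall>n y t. 0 \<le> t \<longrightarrow> t < D n \<longrightarrow>
      (\<exists>s. 0 \<le> s \<and> s < D (n+k) \<and> \<bar>\<phi> (y+t-s) - \<phi> y\<bar> \<le> bound n t)" for k
  proof (induction k)
    case 0
    show ?case
    proof (intro allI impI)
      fix n y t assume t: "0 \<le> t" "t < D n"
      show "\<exists>s. 0 \<le> s \<and> s < D (n+0) \<and> \<bar>\<phi> (y+t-s) - \<phi> y\<bar> \<le> bound n t"
        using t bound_nn[of t n] by (intro exI[of _ t]) auto
    qed
  next
    case (Suc k)
    show ?case
    proof (intro allI impI)
      fix n y t assume t: "0 \<le> t" "t < D n"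
      define d where "d = D (Suc n)"
      have d: "d > 0" unfolding d_def by (rule Dpos)
      define a where "a = nat \<lfloor>t / d\<rfloor>"
      have td: "t / d \<ge> 0" using t d by simp
      then have fl: "\<lfloor>t / d\<rfloor> \<ge> 0" by simp
      have ra: "real a = of_int \<lfloor>t / d\<rfloor>" unfolding a_def using fl by simp
      have a1': "real a \<le> t / d" unfolding ra by (rule of_int_floor_le)
      have a1: "real a * d \<le> t" using a1' d by (simp add: field_simps)
      have a2: "t < real a * d + d"
      proof -
        have "t / d < real a + 1" using ra by linarith
        then show ?thesis using d by (simp add: field_simps)
      qed
      define t' where "t' = t - real a * d"
      have t': "0 \<le> t'" "t' < D (Suc n)" using a1 a2 unfolding t'_def d_def by auto
      obtain s where s: "0 \<le> s" "s < D (Suc n + k)"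
        "\<bar>\<phi> ((y + real a * d) + t' - s) - \<phi> (y + real a * d)\<bar> \<le> bound (Suc n) t'"
        using Suc t' by blast
      have eq: "(y + real a * d) + t' - s = y + t - s" unfolding t'_def by simp
      have m: "\<bar>\<phi> (y + real a * d) - \<phi> y\<bar> \<le> real a * K * d powr \<nu>"
        using mult[of y a "Suc n"] d_def by simp
      have tri: "\<bar>\<phi> (y+t-s) - \<phi> y\<bar> \<le> bound (Suc n) t' + real a * K * d powr \<nu>"
        using s(3) m unfolding eq by linarith
      have dnu: "d powr \<nu> = d * d powr (\<nu>-1)"
        using powr_add[of d 1 "\<nu>-1"] d by simp
      have b1: "real a * K * d powr \<nu> \<le> K * t * d powr (\<nu>-1)"
      proof -
        have "real a * K * d powr \<nu> = K * (real a * d) * d powr (\<nu>-1)" by (simp add: dnu algebra_simps)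
        also have "\<dots> \<le> K * t * d powr (\<nu>-1)"
          using a1 K by (intro mult_right_mono mult_left_mono) auto
        finally show ?thesis .
      qed
      have b2: "K * t' * D (Suc (Suc n)) powr (\<nu>-1) \<le> K * c' * d powr \<alpha>"
      proof -
        have "K * t' * D (Suc (Suc n)) powr (\<nu>-1) \<le> K * (d * D (Suc (Suc n)) powr (\<nu>-1))"
        proof -
          have "t' * D (Suc (Suc n)) powr (\<nu>-1) \<le> d * D (Suc (Suc n)) powr (\<nu>-1)"
            by (rule mult_right_mono) (use t' in \<open>auto simp: d_def\<close>)
          then show ?thesis using K by (simp add: mult.assoc mult_left_mono)
        qed
        also have "\<dots> \<le> K * (c' * d powr \<alpha>)"
          using Dn_bound[of "Suc n"] K unfolding d_def by (intro mult_left_mono) auto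
        finally show ?thesis by simp
      qed
      have b3: "A * D (Suc (Suc (Suc n))) powr \<alpha> \<le> A * (q * d powr \<alpha>)"
        using half_alpha[of "Suc n"] A unfolding d_def by (intro mult_left_mono) auto
      have e2: "A * d powr \<alpha> = A * (q * d powr \<alpha>) + K * c' * d powr \<alpha>"
      proof -
        have "A * d powr \<alpha> - A * (q * d powr \<alpha>) = (A * (1 - q)) * d powr \<alpha>" by (simp add: algebra_simps)
        then show ?thesis using A(2) by simp
      qed
      have x1: "bound (Suc n) t' = K*t'*D (Suc (Suc n)) powr (\<nu>-1) + A*D (Suc (Suc n)) powr \<alpha> + A*D (Suc (Suc (Suc n))) powr \<alpha>"
        by (simp add: bound_def distrib_left)
      have x2: "bound n t = K*t*d powr (\<nu>-1) + A*d powr \<alpha> + A*D (Suc (Suc n)) powr \<alpha>"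
        by (simp add: bound_def d_def distrib_left)
      have "bound (Suc n) t' + real a * K * d powr \<nu> \<le> bound n t"
        unfolding x1 x2 using b1 b2 b3 e2 by linarith
      then show "\<exists>s. 0 \<le> s \<and> s < D (n + Suc k) \<and> \<bar>\<phi> (y+t-s) - \<phi> y\<bar> \<le> bound n t"
        using s tri by (intro exI[of _ s]) auto
    qed
  qed
  have lim_bound: "\<bar>\<phi> (y+t) - \<phi> y\<bar> \<le> bound n t" if t: "0 \<le> t" "t < D n" for n y t
  proof -
    have "\<forall>k. \<exists>s. 0 \<le> s \<and> s < D (n+k) \<and> \<bar>\<phi> (y+t-s) - \<phi> y\<bar> \<le> bound n t"
      using claim t by blast
    then obtain sf where sf: "\<And>k. 0 \<le> sf k \<and> sf k < D (n+k) \<and> \<bar>\<phi> (y+t-sf k) - \<phi> y\<bar> \<le> bound n t"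
      by metis
    have Dn: "(\<lambda>k. D (n+k)) \<longlonglongrightarrow> 0"
      using LIMSEQ_ignore_initial_segment[OF Dlim, of n] by (simp add: add.commute)
    have "sf \<longlonglongrightarrow> 0"
    proof (rule tendsto_sandwich[OF _ _ tendsto_const Dn])
      show "\<forall>\<^sub>F k in sequentially. 0 \<le> sf k" using sf by auto
      show "\<forall>\<^sub>F k in sequentially. sf k \<le> D (n + k)" by (rule always_eventually) (use sf less_imp_le in blast)
    qed
    then have "(\<lambda>k. y + t - sf k) \<longlonglongrightarrow> y + t"
      using tendsto_diff[OF tendsto_const, of sf 0 sequentially "y+t"] by simp
    then have "(\<lambda>k. \<phi> (y + t - sf k)) \<longlonglongrightarrow> \<phi> (y+t)"
      by (rule isCont_tendsto_compose[OF phi_cont])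
    then have "(\<lambda>k. \<bar>\<phi> (y + t - sf k) - \<phi> y\<bar>) \<longlonglongrightarrow> \<bar>\<phi> (y+t) - \<phi> y\<bar>"
      by (intro tendsto_intros)
    then show ?thesis
      by (rule LIMSEQ_le_const2) (use sf in auto)
  qed
  have Mb: "Mb \<ge> 0" using phi_bd[of 0 0] by simp
  define B where "B = max (K * c' + 2 * A) (Mb / D 0 powr \<alpha>)"
  have main: "\<bar>\<phi> (y+t) - \<phi> y\<bar> \<le> B * t powr \<alpha>" if t: "t \<ge> 0" for y t
  proof (cases "t = 0")
    case True then show ?thesis by simp
  next
    case False
    then have tp: "t > 0" using t by simp
    show ?thesis
    proof (cases "t < D 0")
      case False
      have "\<bar>\<phi> (y+t) - \<phi> y\<bar> \<le> Mb" by (rule phi_bd)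
      also have "\<dots> = Mb / D 0 powr \<alpha> * D 0 powr \<alpha>" using Dpos[of 0] by simp
      also have "\<dots> \<le> Mb / D 0 powr \<alpha> * t powr \<alpha>"
        using False Dpos[of 0] Mb \<alpha> by (intro mult_left_mono powr_mono2) auto
      also have "\<dots> \<le> B * t powr \<alpha>" unfolding B_def by (intro mult_right_mono) auto
      finally show ?thesis .
    next
      case True
      have "\<exists>n. D n < t" using order_tendstoD(2)[OF Dlim tp] by (auto dest: eventually_happens)
      then have "\<exists>n. D n \<le> t" by (auto intro: less_imp_le)
      then obtain n where n: "\<not> D n \<le> t" "D (Suc n) \<le> t"
        using exists_least_lemma[of "\<lambda>n. D n \<le> t"] True by auto
      have "\<bar>\<phi> (y+t) - \<phi> y\<bar> \<le> bound n t" using lim_bound[of t n y] t n by simp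
      also have "\<dots> \<le> (K * c' + 2 * A) * t powr \<alpha>"
      proof -
        have "K*t*D (Suc n) powr (\<nu>-1) \<le> K * (t * (c' * t powr ((1+\<delta>)*(\<nu>-1))))"
          using key1[of t n] tp n K by (simp add: mult.assoc mult_left_mono)
        also have "\<dots> = K * c' * t powr \<alpha>" using key2[OF tp] by simp
        finally have 1: "K*t*D (Suc n) powr (\<nu>-1) \<le> K * c' * t powr \<alpha>" .
        have 2: "D (Suc n) powr \<alpha> \<le> t powr \<alpha>" by (rule powr_mono2) (use n Dpos[of "Suc n"] \<alpha> in auto)
        have 3: "D (Suc (Suc n)) powr \<alpha> \<le> t powr \<alpha>"
          by (rule powr_mono2) (use n Dpos[of "Suc (Suc n)"] Dsuc[of "Suc n"] \<alpha> in auto)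
        have "A*(D (Suc n) powr \<alpha> + D (Suc (Suc n)) powr \<alpha>) \<le> A * (2 * t powr \<alpha>)"
          using 2 3 A by (intro mult_left_mono) auto
        then show ?thesis using 1 unfolding bound_def by (simp add: algebra_simps)
      qed
      also have "\<dots> \<le> B * t powr \<alpha>" unfolding B_def by (intro mult_right_mono) auto
      finally show ?thesis .
    qed
  qed
  have "\<bar>\<phi> u - \<phi> v\<bar> \<le> B * \<bar>u - v\<bar> powr \<alpha>" for u v
  proof (cases "v \<le> u")
    case True
    then show ?thesis using main[of "u - v" v] by simp
  next
    case False
    then show ?thesis using main[of "v - u" u] by (simp add: abs_minus_commute)
  qed
  then show ?thesis by blast
qed



lemma per_nat:
  fixes f :: "real \<Rightarrow> real"
  assumes "\<And>x. f (x+1) = f x + c"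
  shows "f (x + real n) = f x + real n * c"
proof (induction n)
  case 0 then show ?case by simp
next
  case (Suc n)
  have "f (x + real (Suc n)) = f ((x + real n) + 1)" by (simp add: algebra_simps)
  also have "\<dots> = f (x + real n) + c" by (rule assms)
  also have "\<dots> = f x + real (Suc n) * c" using Suc by (simp add: algebra_simps)
  finally show ?case .
qed

lemma per_int:
  fixes f :: "real \<Rightarrow> real"
  assumes "\<And>x. f (x+1) = f x + c"
  shows "f (x + of_int k) = f x + of_int k * c"
proof (cases "k \<ge> 0")
  case True
  then obtain n where "k = int n" by (metis nonneg_eq_int)
  then show ?thesis using per_nat[where f=f and c=c, OF assms, of x n] by simp
next
  case False
  then obtain n where n: "k = - int n" by (metis neg_0_le_iff_le nonneg_eq_int le_cases minus_minus)
  have "f ((x - real n) + real n) = f (x - real n) + real n * c" by (rule per_nat[where f=f and c=c, OF assms])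
  then show ?thesis using n by simp
qed

lemma G_diff_lemma:
  fixes h :: "real \<Rightarrow> real"
  assumes hc: "continuous_on UNIV h" and ab: "a \<le> b"
  defines "G \<equiv> \<lambda>x. integral {0..x} h - integral {x..0} h"
  shows "G b - G a = integral {a..b} h"
proof -
  have int: "h integrable_on {u..v}" for u v
    by (rule integrable_continuous_real) (use hc continuous_on_subset in blast)
  have z1: "integral {x..0} h = 0" if "x \<ge> 0" for x
  proof (cases "x = 0")
    case True then show ?thesis by simp
  next
    case False then show ?thesis using that by simp
  qed
  have z2: "integral {0..x} h = 0" if "x \<le> 0" for x
  proof (cases "x = 0")
    case True then show ?thesis by simp
  next
    case False then show ?thesis using that by simp
  qed
  consider "0 \<le> a" | "a \<le> 0" "0 \<le> b" | "b \<le> 0" using ab by linarith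
  then show ?thesis
  proof cases
    case 1
    then show ?thesis using Henstock_Kurzweil_Integration.integral_combine[OF 1 ab int] z1[of a] z1[of b] ab unfolding G_def by simp
  next
    case 2
    then show ?thesis using Henstock_Kurzweil_Integration.integral_combine[OF 2 int] z2[of a] z1[of b] unfolding G_def by simp
  next
    case 3
    then show ?thesis using Henstock_Kurzweil_Integration.integral_combine[OF ab 3 int] z2[of a] z2[of b] ab unfolding G_def by simp
  qed
qed

lemma G_deriv_lemma:
  fixes h :: "real \<Rightarrow> real"
  assumes hc: "continuous_on UNIV h"
  defines "G \<equiv> \<lambda>x. integral {0..x} h - integral {x..0} h"
  shows "(G has_real_derivative h x) (at x)"
proof -
  have d: "((\<lambda>u. integral {x-1..u} h) has_real_derivative h x) (at x within {x-1..x+1})"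
    by (rule integral_has_real_derivative) (use hc continuous_on_subset in auto)
  have "x \<in> interior {x-1..x+1}" by simp
  then have d2: "((\<lambda>u. integral {x-1..u} h) has_real_derivative h x) (at x)"
    using d at_within_interior by metis
  then have d3: "((\<lambda>u. G (x-1) + integral {x-1..u} h) has_real_derivative h x) (at x)"
    using DERIV_add[OF DERIV_const d2] by simp
  show ?thesis
  proof (rule has_field_derivative_transform_within_open[OF d3, of "{x-1<..}"])
    fix u assume "u \<in> {x-1<..}"
    then show "G (x-1) + integral {x-1..u} h = G u"
      using G_diff_lemma[OF hc, of "x-1" u] unfolding G_def by simp
  qed auto
qed

theorem lemma6:
  fixes F F' h :: "real \<Rightarrow> real" and \<delta> \<nu> \<rho> :: real
  assumes "\<delta> \<ge> 0"
    and F_deriv: "\<And>x. (F has_real_derivative F' x) (at x)"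
    and F'_cont: "continuous_on UNIV F'"
    and F'_pos: "\<And>x. F' x > 0"
    and F_lift: "\<And>x. F (x + 1) = F x + 1"
    and rot: "(\<lambda>n. (F ^^ n) 0 / real n) \<longlonglongrightarrow> \<rho>"
    and rho_range: "0 < \<rho>" "\<rho> < 1"
    and rho_D: "in_D \<delta> \<rho>"
    and h_cont: "continuous_on UNIV h"
    and h_pos: "\<And>x. h x > 0"
    and h_per: "\<And>x. h (x + 1) = h x"
    and h_prob: "integral {0..1} h = 1"
    and h_inv: "\<And>a b. a \<le> b \<Longrightarrow> integral {F a..F b} h = integral {a..b} h"
    and nu_range: "\<delta> / (1 + \<delta>) \<le> \<nu>" "\<nu> \<le> 1"
    and deriv_bound: "\<exists>C. \<forall>n \<xi>. \<bar>deriv (F ^^ cf_q \<rho> n) \<xi> - 1\<bar> \<le> C * cf_Delta \<rho> n powr \<nu>"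
  shows "holder_C (\<nu> * (1 + \<delta>) - \<delta>) h"
proof -
  define \<alpha> where "\<alpha> = \<nu> * (1 + \<delta>) - \<delta>"
  have irr: "\<rho> \<notin> \<rat>" using rho_D unfolding in_D_def by (elim conjE)
  note rr = irr rho_range
  have hcont_at: "isCont h x" for x
    using h_cont continuous_on_eq_continuous_at[OF open_UNIV, of h] by blast
  have h_shift: "h (x + of_int k) = h x" for x k
    using per_int[of h 0 x k] h_per by simp
  have h_frac: "h x = h (frac x)" for x
    using h_shift[of "frac x" "\<lfloor>x\<rfloor>"] by (simp add: frac_def)
  obtain xM where xM: "xM \<in> {0..1}" "\<And>y. y \<in> {0..1} \<Longrightarrow> h y \<le> h xM"
    using continuous_attains_sup[OF compact_Icc _ continuous_on_subset[OF h_cont subset_UNIV], of 0 1] by auto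
  obtain xm where xm: "xm \<in> {0..1}" "\<And>y. y \<in> {0..1} \<Longrightarrow> h xm \<le> h y"
    using continuous_attains_inf[OF compact_Icc _ continuous_on_subset[OF h_cont subset_UNIV], of 0 1] by auto
  define M where "M = h xM"
  define m where "m = h xm"
  have hM: "h x \<le> M" for x
    using xM(2)[of "frac x"] h_frac[of x] frac_ge_0[of x] frac_lt_1[of x] unfolding M_def by simp
  have hm: "m \<le> h x" for x
    using xm(2)[of "frac x"] h_frac[of x] frac_ge_0[of x] frac_lt_1[of x] unfolding m_def by simp
  have mpos: "m > 0" unfolding m_def by (rule h_pos)
  have Mpos: "M > 0" unfolding M_def by (rule h_pos)
  define G where "G = (\<lambda>x. integral {0..x} h - integral {x..0} h)"
  have int: "h integrable_on {u..v}" for u v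
    by (rule integrable_continuous_real) (rule continuous_on_subset[OF h_cont subset_UNIV])
  have Gdiff: "G b - G a = integral {a..b} h" if "a \<le> b" for a b
    using G_diff_lemma[OF h_cont that] unfolding G_def by simp
  have Gder: "(G has_real_derivative h x) (at x)" for x
    using G_deriv_lemma[OF h_cont] unfolding G_def by simp
  have Gcont: "isCont G x" for x using Gder by (rule DERIV_isCont)
  have Gup: "G b - G a \<le> M * (b - a)" if "a \<le> b" for a b
  proof -
    have "integral {a..b} h \<le> integral {a..b} (\<lambda>_. M)"
      by (rule integral_le) (use int hM in auto)
    then show ?thesis using Gdiff[OF that] that by (simp add: mult.commute)
  qed
  have Glow: "m * (b - a) \<le> G b - G a" if "a \<le> b" for a b
  proof -
    have "integral {a..b} (\<lambda>_. m) \<le> integral {a..b} h"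
      by (rule integral_le) (use int hm in auto)
    then show ?thesis using Gdiff[OF that] that by (simp add: mult.commute)
  qed
  have Gboth: "m * \<bar>x - y\<bar> \<le> \<bar>G x - G y\<bar> \<and> \<bar>G x - G y\<bar> \<le> M * \<bar>x - y\<bar>" for x y
  proof (cases "x \<le> y")
    case True
    have "0 \<le> m * (y - x)" using mpos True by simp
    then show ?thesis using Gup[OF True] Glow[OF True] True by (simp add: abs_if)
  next
    case False
    then have F: "y \<le> x" by simp
    have "0 \<le> m * (x - y)" using mpos F by simp
    then show ?thesis using Gup[OF F] Glow[OF F] F by (simp add: abs_if)
  qed
  have Glip: "\<bar>G x - G y\<bar> \<le> M * \<bar>x - y\<bar>" for x y using Gboth by blast
  have Glow_abs: "m * \<bar>x - y\<bar> \<le> \<bar>G x - G y\<bar>" for x y using Gboth by blast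
  have Ginj: "x = y" if "G x = G y" for x y
    using Glow_abs[of x y] that mpos by (auto simp: mult_le_0_iff)
  have G1: "G (x + 1) = G x + 1" for x
  proof -
    have dd: "((\<lambda>y. G (y+1) - G y) has_real_derivative 0) (at y)" for y
    proof -
      have one: "((\<lambda>y. y+1) has_real_derivative 1) (at y)"
        using DERIV_add[OF DERIV_ident DERIV_const[of 1 "at y"]] by simp
      have "((\<lambda>y. G (y+1)) has_real_derivative h (y+1) * 1) (at y)"
        by (rule DERIV_chain2[OF Gder one])
      from DERIV_diff[OF this Gder[of y]] show ?thesis using h_per by simp
    qed
    have "G (x+1) - G x = G (0+1) - G 0"
      using DERIV_isconst_all[of "\<lambda>y. G (y+1) - G y" x 0] dd by blast
    also have "\<dots> = 1" using Gdiff[of 0 1] h_prob by simp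
    finally show ?thesis by simp
  qed
  have Gshift: "G (x + of_int k) = G x + of_int k" for x k
    using per_int[of G 1 x k] G1 by simp
  define E where "E = (\<lambda>x. G x - x)"
  have E_frac: "E x = E (frac x)" for x
  proof -
    have e: "frac x + of_int \<lfloor>x\<rfloor> = x" by (simp add: frac_def)
    have "E x = G (frac x + of_int \<lfloor>x\<rfloor>) - (frac x + of_int \<lfloor>x\<rfloor>)" unfolding E_def e ..
    also have "\<dots> = E (frac x)" using Gshift[of "frac x" "\<lfloor>x\<rfloor>"] unfolding E_def by simp
    finally show ?thesis .
  qed
  have "continuous_on {0..1} E" unfolding E_def
    by (intro continuous_intros continuous_at_imp_continuous_on) (use Gcont in auto)
  then have "bounded (E ` {0..1})" by (intro compact_imp_bounded compact_continuous_image) auto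
  then obtain Eb where Eb00: "\<forall>z\<in>E ` {0..1}. norm z \<le> Eb" unfolding bounded_iff by blast
  have Eb0: "\<And>x. x \<in> {0..1} \<Longrightarrow> \<bar>E x\<bar> \<le> Eb" using Eb00 by auto
  have Eb: "\<bar>E x\<bar> \<le> Eb" for x
    using Eb0[of "frac x"] E_frac[of x] frac_ge_0[of x] frac_lt_1[of x] by simp
  have Gonto: "\<exists>x. G x = y" for y
  proof -
    have Eb_nn: "Eb \<ge> 0" using Eb[of 0] by simp
    have "G (y - Eb) \<le> y" using Eb[of "y - Eb"] unfolding E_def by simp
    moreover have "y \<le> G (y + Eb)" using Eb[of "y + Eb"] unfolding E_def by simp
    moreover have "y - Eb \<le> y + Eb" using Eb_nn by simp
    moreover have "\<forall>x. y - Eb \<le> x \<and> x \<le> y + Eb \<longrightarrow> isCont G x" using Gcont by blast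
    ultimately show ?thesis using IVT[of G "y - Eb" y "y + Eb"] by blast
  qed
  define Ginv where "Ginv = (\<lambda>y. SOME x. G x = y)"
  have GGinv: "G (Ginv y) = y" for y unfolding Ginv_def by (rule someI_ex[OF Gonto])
  have GinvG: "Ginv (G x) = x" for x using GGinv[of "G x"] Ginj by blast
  have Ginv_lip: "\<bar>Ginv u - Ginv v\<bar> \<le> (1/m) * \<bar>u - v\<bar>" for u v
  proof -
    have "m * \<bar>Ginv u - Ginv v\<bar> \<le> \<bar>u - v\<bar>" using Glow_abs[of "Ginv u" "Ginv v"] unfolding GGinv .
    then have "\<bar>Ginv u - Ginv v\<bar> \<le> \<bar>u - v\<bar> / m" using mpos by (simp add: pos_le_divide_eq mult.commute)
    then show ?thesis by simp
  qed
  have "(1/m)-lipschitz_on UNIV Ginv"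
    using Ginv_lip mpos by (auto simp: lipschitz_on_def dist_real_def)
  then have "continuous_on UNIV Ginv" by (rule lipschitz_on_continuous_on)
  then have Ginv_cont: "isCont Ginv y" for y using continuous_on_eq_continuous_at[OF open_UNIV, of Ginv] by blast
  define \<phi> where "\<phi> = (\<lambda>y. h (Ginv y))"
  have phi_cont: "isCont \<phi> y" for y unfolding \<phi>_def by (rule isCont_o2[OF Ginv_cont hcont_at])
  have phi_bd: "\<bar>\<phi> u - \<phi> v\<bar> \<le> M" for u v
    unfolding \<phi>_def using hM[of "Ginv u"] hM[of "Ginv v"] h_pos[of "Ginv u"] h_pos[of "Ginv v"] by linarith
  have Fmono: "F a \<le> F b" if "a \<le> b" for a b
  proof (cases "a = b")
    case False
    then have "a < b" using that by simp
    then show ?thesis using DERIV_pos_imp_increasing[of a b F] F_deriv F'_pos by force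
  qed simp
  define cc where "cc = G (F 0) - G 0"
  have GF: "G (F x) = G x + cc" for x
  proof (cases "0 \<le> x")
    case True
    have "G (F x) - G (F 0) = G x - G 0"
      using Gdiff[OF Fmono[OF True]] Gdiff[OF True] h_inv[OF True] by simp
    then show ?thesis unfolding cc_def by simp
  next
    case False
    then have x0: "x \<le> 0" by simp
    have "G (F 0) - G (F x) = G 0 - G x"
      using Gdiff[OF Fmono[OF x0]] Gdiff[OF x0] h_inv[OF x0] by simp
    then show ?thesis unfolding cc_def by simp
  qed
  have GFn: "G ((F ^^ n) x) = G x + real n * cc" for n x
  proof (induction n)
    case 0 then show ?case by simp
  next
    case (Suc n) then show ?case by (simp add: GF algebra_simps)
  qed
  have cc_rho: "cc = \<rho>"
  proof -
    define X where "X = (\<lambda>n. E ((F ^^ n) 0) / real n + (F ^^ n) 0 / real n - G 0 / real n)"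
    have lE: "(\<lambda>n. E ((F ^^ n) 0) / real n) \<longlonglongrightarrow> 0"
    proof (rule tendsto_sandwich[of "\<lambda>n. - (Eb / real n)" _ _ "\<lambda>n. Eb / real n"])
      show "\<forall>\<^sub>F n in sequentially. - (Eb / real n) \<le> E ((F ^^ n) 0) / real n"
      proof (rule always_eventually, rule allI)
        fix n
        have "- Eb \<le> E ((F ^^ n) 0)" using Eb[of "(F ^^ n) 0"] by (simp add: abs_le_iff)
        then have "- Eb / real n \<le> E ((F ^^ n) 0) / real n" by (rule divide_right_mono) simp
        then show "- (Eb / real n) \<le> E ((F ^^ n) 0) / real n" by simp
      qed
      show "\<forall>\<^sub>F n in sequentially. E ((F ^^ n) 0) / real n \<le> Eb / real n"
      proof (rule always_eventually, rule allI)
        fix n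
        have "E ((F ^^ n) 0) \<le> Eb" using Eb[of "(F ^^ n) 0"] by (simp add: abs_le_iff)
        then show "E ((F ^^ n) 0) / real n \<le> Eb / real n" by (rule divide_right_mono) simp
      qed
      show "(\<lambda>n. - (Eb / real n)) \<longlonglongrightarrow> 0" using tendsto_minus[OF lim_const_over_n[of Eb]] by simp
      show "(\<lambda>n. Eb / real n) \<longlonglongrightarrow> 0" by (rule lim_const_over_n)
    qed
    have "X \<longlonglongrightarrow> 0 + \<rho> - 0"
      unfolding X_def by (intro tendsto_diff tendsto_add lE rot lim_const_over_n)
    then have "(\<lambda>n. X (Suc n)) \<longlonglongrightarrow> \<rho>" using LIMSEQ_Suc by force
    moreover have "X (Suc n) = cc" for n
    proof -
      have "E ((F ^^ Suc n) 0) + (F ^^ Suc n) 0 - G 0 = real (Suc n) * cc"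
        using GFn[of "Suc n" 0] unfolding E_def by simp
      then show ?thesis unfolding X_def by (simp add: field_simps add_divide_distrib[symmetric] diff_divide_distrib[symmetric])
    qed
    ultimately show ?thesis by (simp add: LIMSEQ_const_iff)
  qed
  have Fn_diff: "\<exists>D. ((F ^^ n) has_real_derivative D) (at x)" for n x
  proof (induction n arbitrary: x)
    case 0 then show ?case by (auto intro: DERIV_ident)
  next
    case (Suc n)
    obtain D where D: "((F ^^ n) has_real_derivative D) (at x)" using Suc by blast
    have "((\<lambda>x. F ((F ^^ n) x)) has_real_derivative F' ((F ^^ n) x) * D) (at x)"
      by (rule DERIV_chain2[OF F_deriv D])
    then show ?case by (auto simp: o_def)
  qed
  have Fn_deriv: "deriv (F ^^ n) x = h x / h ((F ^^ n) x)" for n x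
  proof -
    obtain D where D: "((F ^^ n) has_real_derivative D) (at x)" using Fn_diff by blast
    have d1: "((\<lambda>x. G ((F ^^ n) x)) has_real_derivative h ((F ^^ n) x) * D) (at x)"
      by (rule DERIV_chain2[OF Gder D])
    have eq: "(\<lambda>x. G ((F ^^ n) x)) = (\<lambda>x. G x + real n * cc)" using GFn by auto
    have d2: "((\<lambda>x. G x + real n * cc) has_real_derivative h x) (at x)"
      using DERIV_add[OF Gder[of x] DERIV_const[of "real n * cc" "at x"]] by simp
    have "h ((F ^^ n) x) * D = h x" using DERIV_unique[OF d1[unfolded eq] d2] .
    then have "D = h x / h ((F ^^ n) x)" using h_pos[of "(F ^^ n) x"] by (simp add: field_simps)
    then show ?thesis using DERIV_imp_deriv[OF D] by simp
  qed
  obtain Cd where Cd: "\<And>n \<xi>. \<bar>deriv (F ^^ cf_q \<rho> n) \<xi> - 1\<bar> \<le> Cd * cf_Delta \<rho> n powr \<nu>"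
    using deriv_bound by blast
  define D where "D = cfP \<rho>"
  have Dpos: "D n > 0" for n unfolding D_def by (rule cfP_pos[OF rr])
  have DD: "cf_Delta \<rho> n = D n" for n unfolding D_def by (rule cf_Delta_eq[OF rr])
  have Cd_nn: "Cd \<ge> 0"
  proof -
    have "\<bar>deriv (F ^^ cf_q \<rho> 0) 0 - 1\<bar> \<le> Cd * D 0 powr \<nu>" using Cd[of 0 0] DD[of 0] by simp
    then have "0 \<le> Cd * D 0 powr \<nu>" using abs_ge_zero order_trans by blast
    then show ?thesis using Dpos[of 0] by (simp add: zero_le_mult_iff)
  qed
  define K where "K = Cd * M"
  have K_nn: "K \<ge> 0" unfolding K_def using Cd_nn Mpos by simp
  have step0: "\<bar>\<phi> y - \<phi> (y + (-1)^n * D n)\<bar> \<le> K * D n powr \<nu>" for n y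
  proof -
    define x where "x = Ginv y"
    define q where "q = cf_q \<rho> n"
    define p where "p = cf_p \<rho> n"
    define e where "e = (-1)^n * D n"
    have e: "real q * \<rho> - real p = e" using cf_e[OF rr, of n] unfolding e_def D_def q_def p_def by simp
    define z where "z = (F ^^ q) x - real p"
    have Gz: "G z = y + e"
    proof -
      have "G z = G ((F ^^ q) x) + of_int (- int p)"
        using Gshift[of "(F ^^ q) x" "- int p"] unfolding z_def by simp
      also have "\<dots> = y + e" using GFn[of q x] GGinv[of y] e cc_rho unfolding x_def by (simp add: algebra_simps)
      finally show ?thesis .
    qed
    have hz: "h z = h ((F ^^ q) x)" using h_shift[of "(F ^^ q) x" "- int p"] unfolding z_def by simp
    have zG: "Ginv (y + e) = z" using GinvG[of z] Gz by simp
    have b: "\<bar>h x / h z - 1\<bar> \<le> Cd * D n powr \<nu>"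
      using Cd[of n x] Fn_deriv[of q x] hz DD[of n] unfolding q_def by simp
    have hzp: "h z > 0" by (rule h_pos)
    have "\<bar>h x - h z\<bar> = \<bar>h x / h z - 1\<bar> * h z" using hzp by (simp add: field_simps abs_mult[symmetric] abs_of_pos)
    also have "\<dots> \<le> Cd * D n powr \<nu> * M"
      using b hzp hM[of z] Cd_nn by (intro mult_mono) auto
    finally have "\<bar>h x - h z\<bar> \<le> K * D n powr \<nu>" unfolding K_def by (simp add: algebra_simps)
    then show ?thesis unfolding \<phi>_def x_def zG[symmetric] e_def .
  qed
  have step: "\<bar>\<phi> (y + D n) - \<phi> y\<bar> \<le> K * D n powr \<nu>" for n y
  proof (cases "even n")
    case True
    then show ?thesis using step0[of y n] by (simp add: abs_minus_commute)
  next
    case False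
    then show ?thesis using step0[of "y + D n" n] by simp
  qed
  show ?thesis
  proof (cases "\<alpha> > 0")
    case False
    then show ?thesis using h_cont unfolding holder_C_def \<alpha>_def by simp
  next
    case True
    obtain c where c: "c > 0" "\<And>n. D (Suc n) \<ge> c * D n powr (1 + \<delta>)"
      using cf_dioph[OF rr rho_D \<open>\<delta> \<ge> 0\<close>] unfolding D_def by blast
    have Dlim: "D \<longlonglongrightarrow> 0" unfolding D_def by (rule cfP_lim[OF rr])
    obtain B where B: "\<And>u v. \<bar>\<phi> u - \<phi> v\<bar> \<le> B * \<bar>u - v\<bar> powr \<alpha>"
      using holder_abstract[of D c \<delta> \<phi> M K \<nu> \<alpha>] Dpos cfP_SS_half[OF rr] cfP_Suc_less[OF rr] Dlim c
        phi_cont phi_bd step K_nn \<open>\<delta> \<ge> 0\<close> nu_range True \<alpha>_def unfolding D_def by blast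
    have "\<bar>h x - h y\<bar> \<le> (max B 0 * M powr \<alpha>) * \<bar>x - y\<bar> powr \<alpha>" for x y
    proof -
      have "\<bar>h x - h y\<bar> = \<bar>\<phi> (G x) - \<phi> (G y)\<bar>" unfolding \<phi>_def GinvG by simp
      also have "\<dots> \<le> max B 0 * \<bar>G x - G y\<bar> powr \<alpha>"
        using B[of "G x" "G y"] mult_right_mono[OF max.cobounded1[of B 0] powr_ge_zero[of "\<bar>G x - G y\<bar>" \<alpha>]]
        by linarith
      also have "\<dots> \<le> max B 0 * (M * \<bar>x - y\<bar>) powr \<alpha>"
        using Glip[of x y] True by (intro mult_left_mono powr_mono2) auto
      also have "\<dots> = (max B 0 * M powr \<alpha>) * \<bar>x - y\<bar> powr \<alpha>"
        using Mpos by (simp add: powr_mult)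
      finally show ?thesis .
    qed
    then show ?thesis using h_cont unfolding holder_C_def \<alpha>_def[symmetric] by blast
  qed
qed

end
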